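(* Let $1\le p<\infty$. The class of weights $A_{\mathrm{loc}}(\mathcal{LM}^{p}(\varphi))$ coincides with $A_{p,\mathrm{loc}}$. Moreover, the constants $[w]_{A_{\mathrm{loc}}(\mathcal{LM}^{p}(\varphi))}$ and $[w]_{A_{p,\mathrm{loc}}}$ are comparable, with constants independent of $w$.
   Context: A weight is a nonnegative locally integrable function on $\mathbb{R}^n$. Let $\varphi$ be a function from the set of Euclidean balls of $\mathbb{R}^n$ to $(0,\infty)$; standing assumptions: $\varphi$ is doubling ($\varphi(2B)\le C\varphi(B)$) and reverse doubling (there are $\delta>0$, $C$ with $\varphi(B_1)/\varphi(B_2)\le C(|B_1|/|B_2|)^\delta$ for balls $B_1\subset B_2$). The weighted local Morrey space $\mathcal{LM}^{p}(\varphi,w)$ consists of measurable $f$ with $\|f\|_{\mathcal{LM}^{p}(\varphi,w)}:=\sup_{R>0}\big(\varphi(B(0,R))^{-1}\int_{B(0,R)}|f|^pw\big)^{1/p}<\infty$. The Köthe dual $X'$ of a Banach lattice $X$ has norm $\|g\|_{X'}:=\sup\{\int|fg|:\|f\|_X\le1\}$. For a ball $B$ let $c_B$ be its center and $r_B$ its radius. $[w]_{A_{\mathrm{loc}}(\mathcal{LM}^{p}(\varphi))}:=\sup_B\|\chi_B\|_{\mathcal{LM}^{p}(\varphi,w)}\|\chi_B\|_{\mathcal{LM}^{p}(\varphi,w)'}/|B|$, the supremum over balls with $|c_B|>4r_B$; $A_{\mathrm{loc}}(\mathcal{LM}^{p}(\varphi))$ is the class where it is finite. For $1<p<\infty$,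 $[w]_{A_{p,\mathrm{loc}}}:=\sup_B w(B)^{1/p}\big(\int_Bw^{1-p'}\big)^{1/p'}/|B|$ and for $p=1$, $[w]_{A_{1,\mathrm{loc}}}:=\sup_B \frac{w(B)}{|B|}\|w^{-1}\chi_B\|_{L^\infty}$, in both cases the supremum over balls with $r_B<|c_B|/4$; $A_{p,\mathrm{loc}}$ is the class where it is finite. *)

theory Defs
  imports "HOL-Analysis.Analysis"
begin

text \<open>Balls B(c,r) with r > 0 are identified with the pair (c,r); a ball function
  phi is a function of centre and radius.  All quantities are ennreal-valued
  (with the ennreal convention 0 * \<infinity> = 0), so that the constants may be infinite.\<close>

definition enn_root :: "real \<Rightarrow> ennreal \<Rightarrow> ennreal" where
  "enn_root q x = (if x = \<infinity> then \<infinity> else ennreal (enn2real x powr q))"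

definition is_weight :: "('a::euclidean_space \<Rightarrow> real) \<Rightarrow> bool" where
  "is_weight w \<longleftrightarrow> (\<forall>x. 0 \<le> w x) \<and> w \<in> borel_measurable lebesgue \<and>
     (\<forall>K. compact K \<longrightarrow> set_integrable lebesgue K w)"

definition doubling :: "('a::euclidean_space \<Rightarrow> real \<Rightarrow> real) \<Rightarrow> bool" where
  "doubling \<phi> \<longleftrightarrow> (\<exists>C. \<forall>c r. 0 < r \<longrightarrow> \<phi> c (2 * r) \<le> C * \<phi> c r)"

definition reverse_doubling :: "('a::euclidean_space \<Rightarrow> real \<Rightarrow> real) \<Rightarrow> bool" where
  "reverse_doubling \<phi> \<longleftrightarrow> (\<exists>\<delta>>0. \<exists>C. \<forall>c1 r1 c2 r2. 0 < r1 \<longrightarrow> 0 < r2 \<longrightarrow>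
      ball c1 r1 \<subseteq> ball c2 r2 \<longrightarrow>
      \<phi> c1 r1 / \<phi> c2 r2 \<le> C * (measure lebesgue (ball c1 r1) / measure lebesgue (ball c2 r2)) powr \<delta>)"

definition lm_norm :: "('a::euclidean_space \<Rightarrow> real \<Rightarrow> real) \<Rightarrow> real \<Rightarrow> ('a \<Rightarrow> real) \<Rightarrow> ('a \<Rightarrow> real) \<Rightarrow> ennreal" where
  "lm_norm \<phi> p w f = (SUP R\<in>{0<..}. enn_root (1/p)
      ((\<integral>\<^sup>+ x\<in>ball 0 R. ennreal (\<bar>f x\<bar> powr p * w x) \<partial>lebesgue) / ennreal (\<phi> 0 R)))"

definition lm_dual_norm :: "('a::euclidean_space \<Rightarrow> real \<Rightarrow> real) \<Rightarrow> real \<Rightarrow> ('a \<Rightarrow> real) \<Rightarrow> ('a \<Rightarrow> real) \<Rightarrow> ennreal" where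
  "lm_dual_norm \<phi> p w g = (SUP f\<in>{f \<in> borel_measurable lebesgue. lm_norm \<phi> p w f \<le> 1}.
      \<integral>\<^sup>+ x. ennreal \<bar>f x * g x\<bar> \<partial>lebesgue)"

definition A_loc_LM_const :: "('a::euclidean_space \<Rightarrow> real \<Rightarrow> real) \<Rightarrow> real \<Rightarrow> ('a \<Rightarrow> real) \<Rightarrow> ennreal" where
  "A_loc_LM_const \<phi> p w = (SUP (c, r)\<in>{(c, r). 0 < r \<and> 4 * r < norm c}.
      lm_norm \<phi> p w (indicator (ball c r)) * lm_dual_norm \<phi> p w (indicator (ball c r))
      / emeasure lebesgue (ball c r))"

text \<open>w^(1-p') for p > 1 (value \<infinity> where w = 0) and w^(-1) for p = 1.\<close>
definition w_dual_power :: "real \<Rightarrow> ('a \<Rightarrow> real) \<Rightarrow> 'a \<Rightarrow> ennreal" where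
  "w_dual_power p w x = (if w x = 0 then \<infinity> else ennreal (w x powr (1 - p / (p - 1))))"

definition w_inv :: "('a \<Rightarrow> real) \<Rightarrow> 'a \<Rightarrow> ennreal" where
  "w_inv w x = (if w x = 0 then \<infinity> else ennreal (1 / w x))"

definition ess_sup_on :: "('a::euclidean_space) set \<Rightarrow> ('a \<Rightarrow> ennreal) \<Rightarrow> ennreal" where
  "ess_sup_on B g = Inf {M. AE x in lebesgue. x \<in> B \<longrightarrow> g x \<le> M}"

definition Ap_loc_const :: "real \<Rightarrow> ('a::euclidean_space \<Rightarrow> real) \<Rightarrow> ennreal" where
  "Ap_loc_const p w =
    (if p = 1 then
       (SUP (c, r)\<in>{(c, r). 0 < r \<and> r < norm c / 4}.
          (\<integral>\<^sup>+ x\<in>ball c r. ennreal (w x) \<partial>lebesgue) / emeasure lebesgue (ball c r)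
          * ess_sup_on (ball c r) (w_inv w))
     else
       (SUP (c, r)\<in>{(c, r). 0 < r \<and> r < norm c / 4}.
          enn_root (1/p) (\<integral>\<^sup>+ x\<in>ball c r. ennreal (w x) \<partial>lebesgue)
          * enn_root ((p - 1) / p) (\<integral>\<^sup>+ x\<in>ball c r. w_dual_power p w x \<partial>lebesgue)
          / emeasure lebesgue (ball c r)))"

end

theory Submission
  imports Defs
begin

lemma enn_root_0[simp]: "0 < q \<Longrightarrow> enn_root q 0 = 0"
  by (simp add: enn_root_def)

lemma enn_root_top[simp]: "enn_root q \<infinity> = \<infinity>"
  by (simp add: enn_root_def)

lemma enn_root_top2[simp]: "enn_root q top = top"
  by (simp add: enn_root_def infinity_ennreal_def)

lemma enn_root_eq_top2: "enn_root q x = top \<longleftrightarrow> x = top"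
  by (cases x) (auto simp: enn_root_def infinity_ennreal_def)

lemma enn_root_ennreal: "0 \<le> x \<Longrightarrow> enn_root q (ennreal x) = ennreal (x powr q)"
  by (simp add: enn_root_def)

lemma enn_root_one[simp]: "enn_root 1 x = x"
  by (cases x) (auto simp: enn_root_def)

lemma enn_root_mono: "0 < q \<Longrightarrow> x \<le> y \<Longrightarrow> enn_root q x \<le> enn_root q y"
proof (cases y)
  case (real r)
  assume "0 < q" "x \<le> y"
  have "x \<noteq> top" using real \<open>x \<le> y\<close> by (auto simp: top_unique)
  then obtain s where s: "x = ennreal s" "0 \<le> s" by (metis ennreal_cases)
  then have "s \<le> r" using real \<open>x \<le> y\<close> by (simp add: ennreal_le_iff)
  then show ?thesis using real s \<open>0<q\<close> by (simp add: enn_root_def powr_mono2)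
qed (simp add: enn_root_def)

lemma enn_root_mult: "0 < q \<Longrightarrow> enn_root q (x * y) = enn_root q x * enn_root q y"
proof (cases x; cases y)
  fix r s assume q: "0 < q" and x: "x = ennreal r" "0 \<le> r" and y: "y = ennreal s" "0 \<le> s"
  then show ?thesis by (simp add: enn_root_def ennreal_mult[symmetric] powr_mult)
next
  fix r assume q: "0 < q" and x: "x = ennreal r" "0 \<le> r" and y: "y = top"
  then show ?thesis by (cases "r = 0") (auto simp: enn_root_def ennreal_mult_top infinity_ennreal_def)
next
  fix s assume q: "0 < q" and x: "x = top" and y: "y = ennreal s" "0 \<le> s"
  then show ?thesis by (cases "s = 0") (auto simp: enn_root_def ennreal_top_mult infinity_ennreal_def)
next
  assume "0 < q" "x = top" "y = top" then show ?thesis by simp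
qed

lemma enn_root_le_1: "0 < q \<Longrightarrow> enn_root q x \<le> 1 \<longleftrightarrow> x \<le> 1"
proof (cases x)
  case (real r)
  assume q: "0 < q"
  have "r powr q \<le> 1 \<longleftrightarrow> r \<le> 1"
  proof
    assume h: "r powr q \<le> 1"
    show "r \<le> 1"
    proof (rule ccontr)
      assume "\<not> r \<le> 1"
      then have "1 powr q < r powr q" using q by (intro powr_less_mono2) auto
      then show False using h by simp
    qed
  next
    assume "r \<le> 1"
    then have "r powr q \<le> 1 powr q" using q real by (intro powr_mono2) auto
    then show "r powr q \<le> 1" by simp
  qed
  then show ?thesis using real q by (simp add: enn_root_def ennreal_le_1)
qed simp

lemma enn_root_root: "0 < a \<Longrightarrow> 0 < b \<Longrightarrow> enn_root a (enn_root b x) = enn_root (a*b) x"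
  by (cases x) (auto simp: enn_root_def powr_powr mult.commute)

lemma enn_root_eq_0: "0 < q \<Longrightarrow> enn_root q x = 0 \<longleftrightarrow> x = 0"
  by (cases x) (auto simp: enn_root_def)

lemma enn_root_eq_top: "enn_root q x = \<infinity> \<longleftrightarrow> x = \<infinity>"
  by (cases x) (auto simp: enn_root_def)

lemma holder_nn:
  fixes F g :: "'a \<Rightarrow> real"
  assumes mF: "F \<in> borel_measurable M" and mg: "g \<in> borel_measurable M"
    and F0: "\<And>x. 0 \<le> F x" and g0: "\<And>x. 0 \<le> g x"
    and ab: "0 < \<alpha>" "0 < \<beta>" "\<alpha> + \<beta> = 1"
  shows "(\<integral>\<^sup>+x. ennreal (F x powr \<alpha> * g x powr \<beta>) \<partial>M)
     \<le> enn_root \<alpha> (\<integral>\<^sup>+x. ennreal (F x) \<partial>M) * enn_root \<beta> (\<integral>\<^sup>+x. ennreal (g x) \<partial>M)"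
proof -
  define IF where "IF = (\<integral>\<^sup>+x. ennreal (F x) \<partial>M)"
  define IG where "IG = (\<integral>\<^sup>+x. ennreal (g x) \<partial>M)"
  have mF': "(\<lambda>x. ennreal (F x)) \<in> borel_measurable M" using mF by measurable
  have mg': "(\<lambda>x. ennreal (g x)) \<in> borel_measurable M" using mg by measurable
  have "(\<integral>\<^sup>+x. ennreal (F x powr \<alpha> * g x powr \<beta>) \<partial>M) \<le> enn_root \<alpha> IF * enn_root \<beta> IG"
  proof (cases "IF = 0 \<or> IG = 0")
    case True
    then have "AE x in M. F x = 0 \<or> g x = 0"
    proof
      assume "IF = 0"
      then have "AE x in M. ennreal (F x) = 0" using mF' unfolding IF_def
        by (simp add: nn_integral_0_iff_AE)
      then show ?thesis by eventually_elim (use F0 in auto)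
    next
      assume "IG = 0"
      then have "AE x in M. ennreal (g x) = 0" using mg' unfolding IG_def
        by (simp add: nn_integral_0_iff_AE)
      then show ?thesis by eventually_elim (use g0 in auto)
    qed
    then have "AE x in M. ennreal (F x powr \<alpha> * g x powr \<beta>) = 0"
      by eventually_elim auto
    then have "(\<integral>\<^sup>+x. ennreal (F x powr \<alpha> * g x powr \<beta>) \<partial>M) = 0"
      by (subst nn_integral_cong_AE[where v="\<lambda>_. 0"]) auto
    then show ?thesis by simp
  next
    case False
    then have nz: "IF \<noteq> 0" "IG \<noteq> 0" by auto
    show ?thesis
    proof (cases "IF = \<infinity> \<or> IG = \<infinity>")
      case True
      then have "enn_root \<alpha> IF * enn_root \<beta> IG = \<infinity>"
        using nz ab by (auto simp: enn_root_eq_top2 enn_root_eq_0 ennreal_top_mult ennreal_mult_top)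
      then show ?thesis by simp
    next
      case False
      have "IF \<noteq> top" "IG \<noteq> top" using False by (auto simp: infinity_ennreal_def)
      then obtain a b where a0: "IF = ennreal a" "0 \<le> a" and b0: "IG = ennreal b" "0 \<le> b"
        by (metis ennreal_cases)
      then have a: "IF = ennreal a" "0 < a" and b: "IG = ennreal b" "0 < b"
        using nz by (auto simp: less_le)
      define c where "c = a powr \<alpha> * b powr \<beta>"
      have c0: "0 \<le> c" by (simp add: c_def)
      have pt: "F x powr \<alpha> * g x powr \<beta> \<le> c * (\<alpha> / a * F x + \<beta> / b * g x)" for x
      proof (cases "F x = 0 \<or> g x = 0")
        case True
        then show ?thesis using F0[of x] g0[of x] ab a b c0 by (auto intro!: mult_nonneg_nonneg add_nonneg_nonneg)
      next
        case False
        then have pos: "0 < F x / a" "0 < g x / b" using F0[of x] g0[of x] a b by auto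
        have "(F x / a) powr \<alpha> * (g x / b) powr \<beta> \<le> \<alpha> * (F x / a) + \<beta> * (g x / b)"
          using Youngs_inequality_0[OF _ _ ab(3) pos] ab by auto
        then have "c * ((F x / a) powr \<alpha> * (g x / b) powr \<beta>) \<le> c * (\<alpha> * (F x / a) + \<beta> * (g x / b))"
          using c0 by (rule mult_left_mono)
        moreover have "c * ((F x / a) powr \<alpha> * (g x / b) powr \<beta>) = F x powr \<alpha> * g x powr \<beta>"
          using a b F0[of x] g0[of x] ab unfolding c_def by (simp add: powr_divide field_simps)
        ultimately show ?thesis by simp
      qed
      have "(\<integral>\<^sup>+x. ennreal (F x powr \<alpha> * g x powr \<beta>) \<partial>M)
          \<le> (\<integral>\<^sup>+x. ennreal c * (ennreal (\<alpha> / a) * ennreal (F x) + ennreal (\<beta> / b) * ennreal (g x)) \<partial>M)"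
        apply (rule nn_integral_mono)
        using pt ab a b F0 g0 c0 by (simp add: ennreal_mult'[symmetric] ennreal_plus[symmetric] ennreal_leI del: ennreal_plus)
      also have "\<dots> = ennreal c * (ennreal (\<alpha> / a) * IF + ennreal (\<beta> / b) * IG)"
        unfolding IF_def IG_def
        using mF' mg' by (simp add: nn_integral_cmult nn_integral_add)
      also have "\<dots> = ennreal c"
        using a b ab by (simp add: ennreal_mult''[symmetric] ennreal_plus[symmetric] del: ennreal_plus)
      also have "\<dots> = enn_root \<alpha> IF * enn_root \<beta> IG"
        using a b unfolding c_def by (simp add: enn_root_ennreal ennreal_mult)
      finally show ?thesis .
    qed
  qed
  then show ?thesis by (simp add: IF_def IG_def)
qed

lemma rd_mono:
  fixes \<phi> :: "'a::euclidean_space \<Rightarrow> real \<Rightarrow> real"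
  assumes pos: "\<And>c r. 0 < r \<Longrightarrow> 0 < \<phi> c r" and rd: "reverse_doubling \<phi>"
  obtains C where "1 \<le> C" "\<And>s R. 0 < s \<Longrightarrow> s \<le> R \<Longrightarrow> \<phi> 0 s \<le> C * \<phi> 0 R"
proof -
  obtain \<delta> C where d: "\<delta> > 0" and C: "\<And>c1 r1 c2 r2. 0 < r1 \<Longrightarrow> 0 < r2 \<Longrightarrow>
      ball c1 r1 \<subseteq> ball c2 r2 \<Longrightarrow>
      \<phi> c1 r1 / \<phi> c2 r2 \<le> C * (measure lebesgue (ball c1 r1) / measure lebesgue (ball c2 r2)) powr \<delta>"
    using rd unfolding reverse_doubling_def by blast
  have "\<phi> 0 s \<le> max 1 C * \<phi> 0 R" if "0 < s" "s \<le> R" for s R :: real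
  proof -
    have sub: "ball (0::'a) s \<subseteq> ball 0 R" using that by auto
    have m: "measure lebesgue (ball (0::'a) s) \<le> measure lebesgue (ball (0::'a) R)"
      using measure_mono_fmeasurable[where M=lebesgue and A="ball (0::'a) s" and B="ball 0 R"] sub by auto
    define q where "q = measure lebesgue (ball (0::'a) s) / measure lebesgue (ball (0::'a) R)"
    have q: "0 \<le> q" "q \<le> 1" unfolding q_def using m
      by (auto simp: divide_le_eq_1)
    have "q powr \<delta> \<le> 1 powr \<delta>" using q d by (intro powr_mono2) auto
    then have "q powr \<delta> \<le> 1" by simp
    moreover have "0 \<le> q powr \<delta>" by simp
    ultimately have "C * q powr \<delta> \<le> max 1 C"
    proof (cases "C \<le> 0")
      case True
      then have "C * q powr \<delta> \<le> 0" using \<open>0 \<le> q powr \<delta>\<close> by (simp add: mult_nonpos_nonneg)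
      then show ?thesis by linarith
    next
      case False
      then have "C * q powr \<delta> \<le> C * 1" using \<open>q powr \<delta> \<le> 1\<close> by (intro mult_left_mono) auto
      then show ?thesis by linarith
    qed
    with C[of s R 0 0] that sub have "\<phi> 0 s / \<phi> 0 R \<le> max 1 C" unfolding q_def by force
    then show ?thesis using pos[of R 0] that by (simp add: divide_le_eq)
  qed
  then show ?thesis using that[of "max 1 C"] by auto
qed

lemma phi_const:
  fixes \<phi> :: "'a::euclidean_space \<Rightarrow> real \<Rightarrow> real"
  assumes pos: "\<And>c r. 0 < r \<Longrightarrow> 0 < \<phi> c r" and db: "doubling \<phi>" and rd: "reverse_doubling \<phi>"
  obtains K where "1 \<le> K" "\<And>s. 0 < s \<Longrightarrow> \<phi> 0 (2 * s) \<le> K * \<phi> 0 s"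
    "\<And>s R. 0 < s \<Longrightarrow> s/2 < R \<Longrightarrow> \<phi> 0 s \<le> K * \<phi> 0 R"
proof -
  obtain Cd where Cd: "\<And>c r. 0 < r \<Longrightarrow> \<phi> c (2 * r) \<le> Cd * \<phi> c r"
    using db unfolding doubling_def by blast
  obtain Cr where Cr: "1 \<le> Cr" "\<And>s R. 0 < s \<Longrightarrow> s \<le> R \<Longrightarrow> \<phi> 0 s \<le> Cr * \<phi> 0 R"
    using rd_mono[OF pos rd] by blast
  define K where "K = max 1 Cd * Cr"
  have K1: "1 \<le> K"
  proof -
    have "1 * 1 \<le> max 1 Cd * Cr" using Cr(1) by (intro mult_mono) auto
    then show ?thesis unfolding K_def by simp
  qed
  have KA: "max 1 Cd \<le> K" "Cr \<le> K"
  proof -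
    have "max 1 Cd * 1 \<le> max 1 Cd * Cr" by (rule mult_left_mono) (use Cr(1) in auto)
    then show "max 1 Cd \<le> K" unfolding K_def by simp
    have "1 * Cr \<le> max 1 Cd * Cr" by (rule mult_right_mono) (use Cr(1) in auto)
    then show "Cr \<le> K" unfolding K_def by simp
  qed
  have 1: "\<phi> 0 (2 * s) \<le> K * \<phi> 0 s" if "0 < s" for s
  proof -
    have ps: "0 < \<phi> 0 s" using pos[OF that] by blast
    have "\<phi> 0 (2 * s) \<le> Cd * \<phi> 0 s" using Cd that by blast
    also have "\<dots> \<le> max 1 Cd * \<phi> 0 s" using ps by (intro mult_right_mono) auto
    also have "\<dots> \<le> K * \<phi> 0 s" using ps KA
      by (intro mult_right_mono) auto
    finally show ?thesis .
  qed
  have 2: "\<phi> 0 s \<le> K * \<phi> 0 R" if "0 < s" "s/2 < R" for s R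
  proof (cases "s \<le> R")
    case True
    have "\<phi> 0 s \<le> Cr * \<phi> 0 R" using Cr(2) True that by blast
    also have "\<dots> \<le> K * \<phi> 0 R" using pos[of R 0] that KA
      by (intro mult_right_mono) auto
    finally show ?thesis .
  next
    case False
    have R0: "0 < R" using that by linarith
    have "\<phi> 0 s \<le> Cr * \<phi> 0 (2 * R)" using Cr(2)[of s "2 * R"] that by auto
    also have "\<dots> \<le> Cr * (max 1 Cd * \<phi> 0 R)"
    proof -
      have "\<phi> 0 (2 * R) \<le> Cd * \<phi> 0 R" using Cd R0 by blast
      also have "\<dots> \<le> max 1 Cd * \<phi> 0 R" using pos[of R 0, OF R0] by (intro mult_right_mono) auto
      finally show ?thesis using Cr(1) by (intro mult_left_mono) auto
    qed
    also have "\<dots> = K * \<phi> 0 R" unfolding K_def by simp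
    finally show ?thesis .
  qed
  show ?thesis using that[OF K1 1 2] by blast
qed

lemma div_ennreal_eq: "0 < y \<Longrightarrow> x / ennreal y = x * ennreal (1 / y)"
  by (simp add: divide_ennreal_def inverse_ennreal divide_inverse)

lemma ind_powr: "0 < p \<Longrightarrow> \<bar>indicator A x :: real\<bar> powr p * v = indicator A x * v"
  by (simp add: indicator_def)

lemma norm_upper:
  fixes \<phi> :: "'a::euclidean_space \<Rightarrow> real \<Rightarrow> real"
  assumes pos: "\<And>c r. 0 < r \<Longrightarrow> 0 < \<phi> c r" and p: "1 \<le> p"
    and K: "\<And>s R. 0 < s \<Longrightarrow> s/2 < R \<Longrightarrow> \<phi> 0 s \<le> K * \<phi> 0 R"
    and r: "0 < r" "4 * r < norm c"
  shows "lm_norm \<phi> p w (indicator (ball c r))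
     \<le> enn_root (1/p) (\<integral>\<^sup>+x\<in>ball c r. ennreal (w x) \<partial>lebesgue) * ennreal ((K / \<phi> 0 (norm c)) powr (1/p))"
  unfolding lm_norm_def
proof (rule SUP_least)
  fix R :: real assume "R \<in> {0<..}"
  then have R: "0 < R" by simp
  define W where "W = (\<integral>\<^sup>+x\<in>ball c r. ennreal (w x) \<partial>lebesgue)"
  define I where "I = (\<integral>\<^sup>+x\<in>ball 0 R. ennreal (\<bar>indicator (ball c r) x :: real\<bar> powr p * w x) \<partial>lebesgue)"
  have I: "I = (\<integral>\<^sup>+x. ennreal (w x) * indicator (ball c r) x * indicator (ball 0 R) x \<partial>lebesgue)"
    unfolding I_def using p
    by (intro nn_integral_cong) (auto simp: indicator_def)
  have c0: "0 < norm c" using r by linarith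
  have Phi: "0 < \<phi> 0 (norm c)" using pos c0 by blast
  show "enn_root (1/p) (I / ennreal (\<phi> 0 R)) \<le> enn_root (1/p) W * ennreal ((K / \<phi> 0 (norm c)) powr (1/p))"
  proof (cases "R \<le> norm c - r")
    case True
    have "ball c r \<inter> ball 0 R = {}"
    proof (rule ccontr)
      assume "ball c r \<inter> ball 0 R \<noteq> {}"
      then obtain x where "dist c x < r" "norm x < R" by auto
      then have "norm c < r + R" by (metis dist_norm norm_triangle_sub add.commute add_strict_mono order.strict_trans1 norm_minus_commute) 
      then show False using True by linarith
    qed
    then have "I = 0" unfolding I by (subst nn_integral_cong[where v="\<lambda>_. 0"]) (auto simp: indicator_def)
    then show ?thesis using p by simp
  next
    case False
    then have "norm c / 2 < R" using r by linarith
    then have le: "\<phi> 0 (norm c) \<le> K * \<phi> 0 R" using K c0 by blast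
    have K0: "0 < K" using le Phi pos[OF R] by (metis mult_nonpos_nonneg not_le order.trans less_le)
    have IW: "I \<le> W" unfolding I W_def
      by (intro nn_integral_mono) (auto simp: indicator_def)
    have "1 / \<phi> 0 R \<le> K / \<phi> 0 (norm c)" using le Phi pos[OF R] K0
      by (simp add: field_simps)
    then have "I / ennreal (\<phi> 0 R) \<le> W * ennreal (K / \<phi> 0 (norm c))"
      using pos[OF R] IW by (auto simp: div_ennreal_eq intro!: mult_mono ennreal_leI)
    then have "enn_root (1/p) (I / ennreal (\<phi> 0 R)) \<le> enn_root (1/p) (W * ennreal (K / \<phi> 0 (norm c)))"
      using p by (intro enn_root_mono) auto
    also have "\<dots> = enn_root (1/p) W * ennreal ((K / \<phi> 0 (norm c)) powr (1/p))"
      using p K0 Phi by (simp add: enn_root_mult enn_root_ennreal)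
    finally show ?thesis unfolding W_def .
  qed
qed

lemma norm_lower:
  fixes \<phi> :: "'a::euclidean_space \<Rightarrow> real \<Rightarrow> real"
  assumes pos: "\<And>c r. 0 < r \<Longrightarrow> 0 < \<phi> c r" and p: "1 \<le> p"
    and K: "\<And>s. 0 < s \<Longrightarrow> \<phi> 0 (2 * s) \<le> K * \<phi> 0 s"
    and r: "0 < r" "4 * r < norm c"
  shows "enn_root (1/p) (\<integral>\<^sup>+x\<in>ball c r. ennreal (w x) \<partial>lebesgue) * ennreal ((1 / (K * \<phi> 0 (norm c))) powr (1/p))
     \<le> lm_norm \<phi> p w (indicator (ball c r))"
  unfolding lm_norm_def
proof (rule SUP_upper2)
  have c0: "0 < norm c" using r by linarith
  show "2 * norm c \<in> {0<..}" using c0 by simp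
  define W where "W = (\<integral>\<^sup>+x\<in>ball c r. ennreal (w x) \<partial>lebesgue)"
  define I where "I = (\<integral>\<^sup>+x\<in>ball 0 (2 * norm c). ennreal (\<bar>indicator (ball c r) x :: real\<bar> powr p * w x) \<partial>lebesgue)"
  have sub: "ball c r \<subseteq> ball 0 (2 * norm c)"
  proof
    fix x assume "x \<in> ball c r"
    then have "norm (x - c) < r" by (simp add: dist_norm norm_minus_commute)
    then have "norm x < norm c + r" using norm_triangle_ineq[of "x - c" c] by simp
    then show "x \<in> ball 0 (2 * norm c)" using r by simp
  qed
  have I: "I = W"
    unfolding I_def W_def using p sub
    by (intro nn_integral_cong) (auto simp: indicator_def)
  have Phi: "0 < \<phi> 0 (norm c)" using pos c0 by blast
  have P2: "0 < \<phi> 0 (2 * norm c)" using pos c0 by simp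
  have le: "\<phi> 0 (2 * norm c) \<le> K * \<phi> 0 (norm c)" using K c0 by blast
  have K0: "0 < K" using le Phi P2 by (metis mult_nonpos_nonneg not_le order.trans less_le)
  have "1 / (K * \<phi> 0 (norm c)) \<le> 1 / \<phi> 0 (2 * norm c)" using le P2
    by (simp add: frac_le)
  then have "W * ennreal (1 / (K * \<phi> 0 (norm c))) \<le> I / ennreal (\<phi> 0 (2 * norm c))"
    using P2 I by (auto simp: div_ennreal_eq intro!: mult_mono ennreal_leI)
  then have "enn_root (1/p) (W * ennreal (1 / (K * \<phi> 0 (norm c)))) \<le> enn_root (1/p) (I / ennreal (\<phi> 0 (2 * norm c)))"
    using p by (intro enn_root_mono) auto
  moreover have "enn_root (1/p) (W * ennreal (1 / (K * \<phi> 0 (norm c)))) = enn_root (1/p) W * ennreal ((1 / (K * \<phi> 0 (norm c))) powr (1/p))"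
    using p K0 Phi by (simp add: enn_root_mult enn_root_ennreal)
  ultimately show "enn_root (1/p) W * ennreal ((1 / (K * \<phi> 0 (norm c))) powr (1/p)) \<le> enn_root (1/p) (I / ennreal (\<phi> 0 (2 * norm c)))"
    by simp
qed

definition Gp :: "real \<Rightarrow> ('a::euclidean_space \<Rightarrow> real) \<Rightarrow> 'a set \<Rightarrow> ennreal" where
  "Gp p w B = (if p = 1 then ess_sup_on B (w_inv w)
     else enn_root ((p-1)/p) (\<integral>\<^sup>+x\<in>B. w_dual_power p w x \<partial>lebesgue))"

lemma ball_sets_leb[measurable]: "ball c r \<in> sets lebesgue"
  using lmeasurable_ball fmeasurableD by blast

lemma lm_norm_le1_D:
  fixes \<phi> :: "'a::euclidean_space \<Rightarrow> real \<Rightarrow> real"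
  assumes "lm_norm \<phi> p w f \<le> 1" "0 < R" "0 < \<phi> 0 R" "1 \<le> p"
  shows "(\<integral>\<^sup>+x\<in>ball 0 R. ennreal (\<bar>f x\<bar> powr p * w x) \<partial>lebesgue) \<le> ennreal (\<phi> 0 R)"
proof -
  define I where "I = (\<integral>\<^sup>+x\<in>ball 0 R. ennreal (\<bar>f x\<bar> powr p * w x) \<partial>lebesgue)"
  have "enn_root (1/p) (I / ennreal (\<phi> 0 R)) \<le> lm_norm \<phi> p w f"
    unfolding lm_norm_def I_def by (rule SUP_upper) (use assms in auto)
  then have "enn_root (1/p) (I / ennreal (\<phi> 0 R)) \<le> 1" using assms by simp
  then have "I * ennreal (1 / \<phi> 0 R) \<le> 1" using assms by (simp add: enn_root_le_1 div_ennreal_eq)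
  then have "I * ennreal (1 / \<phi> 0 R) * ennreal (\<phi> 0 R) \<le> 1 * ennreal (\<phi> 0 R)"
    by (rule mult_right_mono) simp
  then show ?thesis unfolding I_def using assms
    by (simp add: mult.assoc ennreal_mult''[symmetric])
qed

lemma dual_upper:
  fixes \<phi> :: "'a::euclidean_space \<Rightarrow> real \<Rightarrow> real"
  assumes pos: "\<And>c r. 0 < r \<Longrightarrow> 0 < \<phi> c r" and p: "1 \<le> p"
    and K: "\<And>s. 0 < s \<Longrightarrow> \<phi> 0 (2 * s) \<le> K * \<phi> 0 s"
    and w: "is_weight w"
    and r: "0 < r" "4 * r < norm c"
  shows "lm_dual_norm \<phi> p w (indicator (ball c r))
     \<le> ennreal ((K * \<phi> 0 (norm c)) powr (1/p)) * Gp p w (ball c r)"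
  unfolding lm_dual_norm_def
proof (rule SUP_least)
  fix f assume "f \<in> {f \<in> borel_measurable lebesgue. lm_norm \<phi> p w f \<le> 1}"
  then have fm[measurable]: "f \<in> borel_measurable lebesgue" and fn: "lm_norm \<phi> p w f \<le> 1" by auto
  have wm[measurable]: "w \<in> borel_measurable lebesgue" and w0: "\<And>x. 0 \<le> w x"
    using w unfolding is_weight_def by auto
  define B where "B = ball c r"
  have c0: "0 < norm c" using r by linarith
  have Phi: "0 < \<phi> 0 (norm c)" using pos c0 by blast
  have P2: "0 < \<phi> 0 (2 * norm c)" using pos c0 by simp
  have le: "\<phi> 0 (2 * norm c) \<le> K * \<phi> 0 (norm c)" using K c0 by blast
  have K0: "0 < K" using le Phi P2 by (metis mult_nonpos_nonneg not_le order.trans less_le)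
  have KP: "0 < K * \<phi> 0 (norm c)" using K0 Phi by simp
  have sub: "B \<subseteq> ball 0 (2 * norm c)"
  proof
    fix x assume "x \<in> B"
    then have "norm (x - c) < r" by (simp add: B_def dist_norm norm_minus_commute)
    then have "norm x < norm c + r" using norm_triangle_ineq[of "x - c" c] by simp
    then show "x \<in> ball 0 (2 * norm c)" using r by simp
  qed
  define F where "F x = \<bar>f x\<bar> powr p * w x * indicator B x" for x
  have Fm[measurable]: "F \<in> borel_measurable lebesgue" unfolding F_def B_def by measurable
  have F0: "0 \<le> F x" for x unfolding F_def using w0 by simp
  have IF: "(\<integral>\<^sup>+x. ennreal (F x) \<partial>lebesgue) \<le> ennreal (K * \<phi> 0 (norm c))"
  proof -
    have "(\<integral>\<^sup>+x. ennreal (F x) \<partial>lebesgue) \<le> (\<integral>\<^sup>+x\<in>ball 0 (2 * norm c). ennreal (\<bar>f x\<bar> powr p * w x) \<partial>lebesgue)"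
      unfolding F_def using sub w0 by (intro nn_integral_mono) (auto simp: indicator_def)
    also have "\<dots> \<le> ennreal (\<phi> 0 (2 * norm c))"
      using lm_norm_le1_D[OF fn _ P2 p] c0 by simp
    also have "\<dots> \<le> ennreal (K * \<phi> 0 (norm c))" using le by (simp add: ennreal_leI)
    finally show ?thesis .
  qed
  have main: "(\<integral>\<^sup>+x. ennreal \<bar>f x * indicator B x\<bar> \<partial>lebesgue) \<le> ennreal ((K * \<phi> 0 (norm c)) powr (1/p)) * Gp p w B"
  proof (cases "p = 1")
    case pe: True
    define S where "S = {M. AE x in lebesgue. x \<in> B \<longrightarrow> w_inv w x \<le> M}"
    have G: "Gp p w B = Inf S" using pe unfolding Gp_def ess_sup_on_def S_def by simp
    have "(\<integral>\<^sup>+x. ennreal \<bar>f x * indicator B x\<bar> \<partial>lebesgue) * ennreal (1 / (K * \<phi> 0 (norm c))) \<le> M" if "M \<in> S" for M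
    proof (cases "M = top")
      case True then show ?thesis by simp
    next
      case False
      have ae: "AE x in lebesgue. x \<in> B \<longrightarrow> w_inv w x \<le> M" using that S_def by simp
      have "AE x in lebesgue. ennreal \<bar>f x * indicator B x\<bar> \<le> M * ennreal (F x)"
        using ae
      proof eventually_elim
        case (elim x)
        show ?case
        proof (cases "x \<in> B")
          case True
          then have wi: "w_inv w x \<le> M" using elim by simp
          then have wx: "w x \<noteq> 0" using False by (auto simp: w_inv_def infinity_ennreal_def top_unique)
          then have "ennreal (1 / w x) \<le> M" using wi by (simp add: w_inv_def)
          then have "ennreal (1 / w x) * ennreal (F x) \<le> M * ennreal (F x)" by (rule mult_right_mono) simp
          moreover have "ennreal (1 / w x) * ennreal (F x) = ennreal \<bar>f x * indicator B x\<bar>"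
            using True wx w0[of x] pe unfolding F_def True by (simp add: ennreal_mult''[symmetric] abs_mult)
          ultimately show ?thesis by simp
        qed simp
      qed
      then have "(\<integral>\<^sup>+x. ennreal \<bar>f x * indicator B x\<bar> \<partial>lebesgue) \<le> (\<integral>\<^sup>+x. M * ennreal (F x) \<partial>lebesgue)"
        by (rule nn_integral_mono_AE)
      also have "\<dots> = M * (\<integral>\<^sup>+x. ennreal (F x) \<partial>lebesgue)" by (simp add: nn_integral_cmult)
      also have "\<dots> \<le> M * ennreal (K * \<phi> 0 (norm c))" using IF by (rule mult_left_mono) simp
      finally have "(\<integral>\<^sup>+x. ennreal \<bar>f x * indicator B x\<bar> \<partial>lebesgue) * ennreal (1 / (K * \<phi> 0 (norm c)))
          \<le> M * ennreal (K * \<phi> 0 (norm c)) * ennreal (1 / (K * \<phi> 0 (norm c)))"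
        by (rule mult_right_mono) simp
      also have "\<dots> = M" using KP K0 Phi by (simp add: mult.assoc ennreal_mult''[symmetric])
      finally show ?thesis .
    qed
    then have "(\<integral>\<^sup>+x. ennreal \<bar>f x * indicator B x\<bar> \<partial>lebesgue) * ennreal (1 / (K * \<phi> 0 (norm c))) \<le> Inf S"
      by (rule Inf_greatest)
    then have "(\<integral>\<^sup>+x. ennreal \<bar>f x * indicator B x\<bar> \<partial>lebesgue) * ennreal (1 / (K * \<phi> 0 (norm c))) * ennreal (K * \<phi> 0 (norm c))
       \<le> ennreal (K * \<phi> 0 (norm c)) * Inf S"
      by (subst mult.commute[of _ "ennreal _"]) (rule mult_left_mono, simp_all)
    then show ?thesis using KP K0 Phi pe G by (simp add: B_def mult.assoc ennreal_mult''[symmetric])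
  next
    case False
    then have p1: "1 < p" using p by simp
    define J where "J = (\<integral>\<^sup>+x\<in>B. w_dual_power p w x \<partial>lebesgue)"
    have G: "Gp p w B = enn_root ((p-1)/p) J" using False unfolding Gp_def J_def by simp
    show ?thesis
    proof (cases "J = top")
      case True
      then show ?thesis using G KP K0 Phi by (simp add: ennreal_mult_top)
    next
      case Jfin: False
      have wdm[measurable]: "w_dual_power p w \<in> borel_measurable lebesgue"
        unfolding w_dual_power_def by measurable
      have "AE x in lebesgue. w_dual_power p w x * indicator B x \<noteq> \<infinity>"
      proof (rule nn_integral_PInf_AE)
        show "(\<lambda>x. w_dual_power p w x * indicator B x) \<in> borel_measurable lebesgue"
          unfolding B_def by measurable
        show "(\<integral>\<^sup>+x. w_dual_power p w x * indicator B x \<partial>lebesgue) \<noteq> \<infinity>"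
          using Jfin unfolding J_def by (simp add: infinity_ennreal_def)
      qed
      then have aew: "AE x in lebesgue. x \<in> B \<longrightarrow> w x \<noteq> 0"
        by eventually_elim (auto simp: w_dual_power_def infinity_ennreal_def)
      define g where "g x = w x powr (1 - p / (p - 1)) * indicator B x" for x
      have gm[measurable]: "g \<in> borel_measurable lebesgue" unfolding g_def B_def by measurable
      have g0: "0 \<le> g x" for x unfolding g_def by simp
      have Jg: "(\<integral>\<^sup>+x. ennreal (g x) \<partial>lebesgue) = J"
        unfolding J_def using aew
        by (intro nn_integral_cong_AE) (auto simp: g_def w_dual_power_def indicator_def)
      have eq: "AE x in lebesgue. ennreal \<bar>f x * indicator B x\<bar> = ennreal (F x powr (1/p) * g x powr ((p-1)/p))"
        using aew
      proof eventually_elim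
        case (elim x)
        show ?case
        proof (cases "x \<in> B")
          case True
          then have wx: "0 < w x" using elim w0[of x] by (simp add: less_le)
          have a: "F x powr (1/p) = \<bar>f x\<bar> * w x powr (1/p)"
            using True wx p unfolding F_def by (simp add: powr_mult powr_powr)
          have b: "g x powr ((p-1)/p) = w x powr (- 1/p)"
          proof -
            have "(1 - p / (p - 1)) * ((p - 1) / p) = - 1/p" using p1 by (simp add: field_simps)
            then show ?thesis using True wx unfolding g_def by (simp add: powr_powr)
          qed
          have "F x powr (1/p) * g x powr ((p-1)/p) = \<bar>f x\<bar> * (w x powr (1/p) * w x powr (- 1/p))"
            using a b by simp
          also have "\<dots> = \<bar>f x\<bar>" using wx by (simp add: powr_add[symmetric])
          finally show ?thesis using True by (simp add: abs_mult)
        qed (simp add: F_def g_def)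
      qed
      have "(\<integral>\<^sup>+x. ennreal \<bar>f x * indicator B x\<bar> \<partial>lebesgue) = (\<integral>\<^sup>+x. ennreal (F x powr (1/p) * g x powr ((p-1)/p)) \<partial>lebesgue)"
        by (rule nn_integral_cong_AE[OF eq])
      also have "\<dots> \<le> enn_root (1/p) (\<integral>\<^sup>+x. ennreal (F x) \<partial>lebesgue) * enn_root ((p-1)/p) (\<integral>\<^sup>+x. ennreal (g x) \<partial>lebesgue)"
        by (rule holder_nn[OF Fm gm F0 g0]) (use p1 in \<open>auto simp: field_simps\<close>)
      also have "\<dots> \<le> ennreal ((K * \<phi> 0 (norm c)) powr (1/p)) * Gp p w B"
        unfolding G Jg
      proof (rule mult_right_mono)
        have "enn_root (1/p) (\<integral>\<^sup>+x. ennreal (F x) \<partial>lebesgue) \<le> enn_root (1/p) (ennreal (K * \<phi> 0 (norm c)))"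
          using IF p by (intro enn_root_mono) auto
        then show "enn_root (1/p) (\<integral>\<^sup>+x. ennreal (F x) \<partial>lebesgue) \<le> ennreal ((K * \<phi> 0 (norm c)) powr (1/p))"
          using KP by (simp add: enn_root_ennreal)
      qed simp
      finally show ?thesis .
    qed
  qed
  then show "(\<integral>\<^sup>+x. ennreal \<bar>f x * indicator (ball c r) x\<bar> \<partial>lebesgue) \<le> ennreal ((K * \<phi> 0 (norm c)) powr (1/p)) * Gp p w (ball c r)"
    by (simp add: B_def)
qed

lemma test_fn:
  fixes \<phi> :: "'a::euclidean_space \<Rightarrow> real \<Rightarrow> real"
  assumes pos: "\<And>c r. 0 < r \<Longrightarrow> 0 < \<phi> c r" and p: "1 \<le> p"
    and K: "\<And>s R. 0 < s \<Longrightarrow> s/2 < R \<Longrightarrow> \<phi> 0 s \<le> K * \<phi> 0 R" and K1: "1 \<le> K"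
    and r: "0 < r" "4 * r < norm c"
    and w0: "\<And>x. 0 \<le> w x"
    and fm: "f \<in> borel_measurable lebesgue"
    and fI: "(\<integral>\<^sup>+x. ennreal (\<bar>f x\<bar> powr p * w x * indicator (ball c r) x) \<partial>lebesgue) \<le> ennreal (\<phi> 0 (norm c) / K)"
  shows "(\<integral>\<^sup>+x. ennreal \<bar>f x * indicator (ball c r) x\<bar> \<partial>lebesgue) \<le> lm_dual_norm \<phi> p w (indicator (ball c r))"
proof -
  define f' where "f' x = f x * indicator (ball c r) x" for x
  have f'm: "f' \<in> borel_measurable lebesgue" unfolding f'_def using fm by measurable
  have c0: "0 < norm c" using r by linarith
  have Phi: "0 < \<phi> 0 (norm c)" using pos c0 by blast
  have "lm_norm \<phi> p w f' \<le> 1"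
    unfolding lm_norm_def
  proof (rule SUP_least)
    fix R :: real assume "R \<in> {0<..}"
    then have R: "0 < R" by simp
    have PR: "0 < \<phi> 0 R" using pos R by blast
    define I where "I = (\<integral>\<^sup>+x\<in>ball 0 R. ennreal (\<bar>f' x\<bar> powr p * w x) \<partial>lebesgue)"
    have "I \<le> ennreal (\<phi> 0 R)"
    proof (cases "R \<le> norm c - r")
      case True
      have disj: "x \<in> ball c r \<Longrightarrow> x \<notin> ball 0 R" for x
      proof
        assume "x \<in> ball c r" "x \<in> ball 0 R"
        then have "dist c x < r" "norm x < R" by auto
        then have "norm c < r + R" by (metis dist_norm norm_triangle_sub add.commute add_strict_mono order.strict_trans1 norm_minus_commute)
        then show False using True by linarith
      qed
      have "I = 0" unfolding I_def f'_def using p disj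
        by (subst nn_integral_cong[where v="\<lambda>_. 0"]) (auto simp: indicator_def)
      then show ?thesis by simp
    next
      case False
      then have "norm c / 2 < R" using r by linarith
      then have le: "\<phi> 0 (norm c) \<le> K * \<phi> 0 R" using K c0 by blast
      have "I \<le> (\<integral>\<^sup>+x. ennreal (\<bar>f x\<bar> powr p * w x * indicator (ball c r) x) \<partial>lebesgue)"
        unfolding I_def f'_def using p w0
        by (intro nn_integral_mono) (auto simp: indicator_def)
      also have "\<dots> \<le> ennreal (\<phi> 0 (norm c) / K)" by (rule fI)
      also have "\<dots> \<le> ennreal (\<phi> 0 R)" using le K1 PR
        by (intro ennreal_leI) (simp add: divide_le_eq mult.commute)
      finally show ?thesis .
    qed
    then have "I * ennreal (1 / \<phi> 0 R) \<le> ennreal (\<phi> 0 R) * ennreal (1 / \<phi> 0 R)"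
      by (rule mult_right_mono) simp
    also have "\<dots> = 1" using PR by (simp add: ennreal_mult''[symmetric])
    finally have "I / ennreal (\<phi> 0 R) \<le> 1" using PR by (simp add: div_ennreal_eq)
    then show "enn_root (1/p) (I / ennreal (\<phi> 0 R)) \<le> 1" using p by (simp add: enn_root_le_1)
  qed
  then have "(\<integral>\<^sup>+x. ennreal \<bar>f' x * indicator (ball c r) x\<bar> \<partial>lebesgue) \<le> lm_dual_norm \<phi> p w (indicator (ball c r))"
    unfolding lm_dual_norm_def using f'm by (intro SUP_upper) auto
  moreover have "(\<integral>\<^sup>+x. ennreal \<bar>f' x * indicator (ball c r) x\<bar> \<partial>lebesgue) = (\<integral>\<^sup>+x. ennreal \<bar>f x * indicator (ball c r) x\<bar> \<partial>lebesgue)"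
    unfolding f'_def by (intro nn_integral_cong) (auto simp: indicator_def)
  ultimately show ?thesis by simp
qed

lemma emeasure_ball_fin: "emeasure lebesgue (ball (c::'a::euclidean_space) r) < \<infinity>"
  using lmeasurable_ball[of c r] unfolding fmeasurable_def by (simp add: infinity_ennreal_def)

lemma dual_lower_1:
  fixes \<phi> :: "'a::euclidean_space \<Rightarrow> real \<Rightarrow> real"
  assumes pos: "\<And>c r. 0 < r \<Longrightarrow> 0 < \<phi> c r" and p: "p = 1"
    and K: "\<And>s R. 0 < s \<Longrightarrow> s/2 < R \<Longrightarrow> \<phi> 0 s \<le> K * \<phi> 0 R" and K1: "1 \<le> K"
    and r: "0 < r" "4 * r < norm c"
    and w: "is_weight w"
  shows "ennreal ((\<phi> 0 (norm c) / K) powr (1/p)) * Gp p w (ball c r) \<le> lm_dual_norm \<phi> p w (indicator (ball c r))"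
proof -
  have wm[measurable]: "w \<in> borel_measurable lebesgue" and w0: "\<And>x. 0 \<le> w x"
    using w unfolding is_weight_def by auto
  have wim[measurable]: "w_inv w \<in> borel_measurable lebesgue" unfolding w_inv_def by measurable
  define B where "B = ball c r"
  have Bm[measurable]: "B \<in> sets lebesgue" unfolding B_def by measurable
  define D where "D = lm_dual_norm \<phi> p w (indicator B)"
  define S where "S = {M. AE x in lebesgue. x \<in> B \<longrightarrow> w_inv w x \<le> M}"
  have G: "Gp p w B = Inf S" using p unfolding Gp_def ess_sup_on_def S_def by simp
  have c0: "0 < norm c" using r by linarith
  have Phi: "0 < \<phi> 0 (norm c)" using pos c0 by blast
  define M where "M = \<phi> 0 (norm c) / K"
  have p1: "1 \<le> p" using p by simp
  have M0: "0 < M" unfolding M_def using Phi K1 by simp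
  have key: "ennreal (M * t) \<le> D" if t: "ennreal t < Inf S" "0 < t" for t
  proof -
    have "ennreal t \<notin> S"
    proof
      assume "ennreal t \<in> S"
      then have "Inf S \<le> ennreal t" by (rule Inf_lower)
      then show False using t(1) by simp
    qed
    then have nae: "\<not> (AE x in lebesgue. x \<in> B \<longrightarrow> w_inv w x \<le> ennreal t)" unfolding S_def by simp
    define E where "E = {x. x \<in> B \<and> ennreal t < w_inv w x}"
    have Em[measurable]: "E \<in> sets lebesgue" unfolding E_def by measurable
    have "{x \<in> space lebesgue. \<not> (x \<in> B \<longrightarrow> w_inv w x \<le> ennreal t)} = E"
      unfolding E_def by (auto simp: not_le)
    then have "(AE x in lebesgue. x \<in> B \<longrightarrow> w_inv w x \<le> ennreal t) \<longleftrightarrow> emeasure lebesgue E = 0"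
      by (rule AE_iff_measurable[OF Em])
    then have "emeasure lebesgue E \<noteq> 0" using nae by simp
    moreover have EB: "E \<subseteq> B" unfolding E_def by auto
    moreover have "emeasure lebesgue E \<le> emeasure lebesgue B"
      using EB by (intro emeasure_mono) auto
    then have "emeasure lebesgue E \<noteq> top" using emeasure_ball_fin[of c r] unfolding B_def
      by (auto simp: infinity_ennreal_def top_unique)
    ultimately obtain e where e: "emeasure lebesgue E = ennreal e" "0 < e"
    proof -
      assume h: "emeasure lebesgue E \<noteq> 0" "E \<subseteq> B" "emeasure lebesgue E \<noteq> top"
        and th: "\<And>e. emeasure lebesgue E = ennreal e \<Longrightarrow> 0 < e \<Longrightarrow> thesis"
      have eq: "emeasure lebesgue E = ennreal (measure lebesgue E)"
        using h(3) by (intro emeasure_eq_ennreal_measure) (simp add: infinity_ennreal_def)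
      then have "measure lebesgue E \<noteq> 0" using h(1) by auto
      then have "0 < measure lebesgue E" using measure_nonneg[of lebesgue E] by linarith
      then show thesis using th eq by blast
    qed
    have wE: "w x \<le> 1 / t" if "x \<in> E" for x
    proof (cases "w x = 0")
      case True then show ?thesis using t by simp
    next
      case False
      then have "ennreal t < ennreal (1 / w x)" using that unfolding E_def w_inv_def by simp
      then have "t < 1 / w x" using t(2) ennreal_less_iff[of t "1 / w x"] by simp
      then show ?thesis using False w0[of x] t(2) by (simp add: field_simps)
    qed
    define a where "a = M * t / e"
    have a0: "0 < a" unfolding a_def using M0 t e by simp
    define f where "f x = a * indicator E x" for x
    have fm: "f \<in> borel_measurable lebesgue" unfolding f_def by measurable
    have "(\<integral>\<^sup>+x. ennreal (\<bar>f x\<bar> powr p * w x * indicator (ball c r) x) \<partial>lebesgue)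
        \<le> (\<integral>\<^sup>+x. ennreal (a / t) * indicator E x \<partial>lebesgue)"
    proof (intro nn_integral_mono)
      fix x show "ennreal (\<bar>f x\<bar> powr p * w x * indicator (ball c r) x) \<le> ennreal (a / t) * indicator E x"
      proof (cases "x \<in> E")
        case True
        then have "a * w x \<le> a * (1 / t)" using wE a0 by (intro mult_left_mono) auto
        then show ?thesis using True EB a0 p unfolding f_def B_def by (auto simp: indicator_def intro!: ennreal_leI)
      qed (simp add: f_def)
    qed
    also have "\<dots> = ennreal (a / t) * ennreal e" using e by (simp add: nn_integral_cmult_indicator)
    also have "\<dots> = ennreal M" unfolding a_def using e t M0 by (simp add: ennreal_mult''[symmetric])
    finally have fI: "(\<integral>\<^sup>+x. ennreal (\<bar>f x\<bar> powr p * w x * indicator (ball c r) x) \<partial>lebesgue) \<le> ennreal (\<phi> 0 (norm c) / K)"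
      unfolding M_def .
    have "(\<integral>\<^sup>+x. ennreal \<bar>f x * indicator (ball c r) x\<bar> \<partial>lebesgue) \<le> D"
      unfolding D_def B_def
      using test_fn[where \<phi>=\<phi> and p=p and K=K and r=r and c=c and w=w and f=f, OF pos p1 K K1 r w0 fm fI] .
    moreover have "(\<integral>\<^sup>+x. ennreal \<bar>f x * indicator (ball c r) x\<bar> \<partial>lebesgue) = (\<integral>\<^sup>+x. ennreal a * indicator E x \<partial>lebesgue)"
      using EB a0 unfolding f_def B_def by (intro nn_integral_cong) (auto simp: indicator_def)
    moreover have "\<dots> = ennreal (M * t)" using e a0 unfolding a_def
      by (simp add: nn_integral_cmult_indicator ennreal_mult''[symmetric])
    ultimately show ?thesis by simp
  qed
  have "Inf S \<le> D * ennreal (1 / M)"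
  proof (rule dense_le)
    fix y assume y: "y < Inf S"
    then have "y \<noteq> top" by (auto simp: top_unique)
    then obtain t where t: "y = ennreal t" "0 \<le> t" by (metis ennreal_cases)
    show "y \<le> D * ennreal (1 / M)"
    proof (cases "t = 0")
      case True then show ?thesis using t by simp
    next
      case False
      then have "ennreal (M * t) \<le> D" using key y t by simp
      then have "ennreal (M * t) * ennreal (1 / M) \<le> D * ennreal (1 / M)" by (rule mult_right_mono) simp
      moreover have "ennreal (M * t) * ennreal (1 / M) = y" using t M0 by (simp add: ennreal_mult''[symmetric])
      ultimately show ?thesis by simp
    qed
  qed
  then have "ennreal M * Inf S \<le> ennreal M * (D * ennreal (1 / M))" by (rule mult_left_mono) simp
  also have "\<dots> = D" using M0 by (simp add: ennreal_mult''[symmetric] mult.assoc mult.left_commute[of "ennreal M"])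
  finally show ?thesis using p G Phi K1 unfolding M_def D_def B_def by simp
qed

lemma dual_lower_p:
  fixes \<phi> :: "'a::euclidean_space \<Rightarrow> real \<Rightarrow> real"
  assumes pos: "\<And>c r. 0 < r \<Longrightarrow> 0 < \<phi> c r" and p: "1 < p"
    and K: "\<And>s R. 0 < s \<Longrightarrow> s/2 < R \<Longrightarrow> \<phi> 0 s \<le> K * \<phi> 0 R" and K1: "1 \<le> K"
    and r: "0 < r" "4 * r < norm c"
    and w: "is_weight w"
  shows "ennreal ((\<phi> 0 (norm c) / K) powr (1/p)) * Gp p w (ball c r) \<le> lm_dual_norm \<phi> p w (indicator (ball c r))"
proof -
  have wm[measurable]: "w \<in> borel_measurable lebesgue" and w0: "\<And>x. 0 \<le> w x"
    using w unfolding is_weight_def by auto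
  have p1: "1 \<le> p" using p by simp
  define B where "B = ball c r"
  have Bm[measurable]: "B \<in> sets lebesgue" unfolding B_def by measurable
  have Bfin: "emeasure lebesgue B < top" using emeasure_ball_fin[of c r] unfolding B_def
    by (simp add: infinity_ennreal_def)
  define D where "D = lm_dual_norm \<phi> p w (indicator B)"
  define J where "J = (\<integral>\<^sup>+x\<in>B. w_dual_power p w x \<partial>lebesgue)"
  have G: "Gp p w B = enn_root ((p-1)/p) J" using p unfolding Gp_def J_def by simp
  have c0: "0 < norm c" using r by linarith
  have Phi: "0 < \<phi> 0 (norm c)" using pos c0 by blast
  define M where "M = \<phi> 0 (norm c) / K"
  have M0: "0 < M" unfolding M_def using Phi K1 by simp
  have testD: "(\<integral>\<^sup>+x. ennreal \<bar>f x * indicator B x\<bar> \<partial>lebesgue) \<le> D"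
    if fm: "f \<in> borel_measurable lebesgue"
      and fI: "(\<integral>\<^sup>+x. ennreal (\<bar>f x\<bar> powr p * w x * indicator B x) \<partial>lebesgue) \<le> ennreal M" for f
    unfolding D_def B_def
    using test_fn[where \<phi>=\<phi> and p=p and K=K and r=r and c=c and w=w and f=f, OF pos p1 K K1 r w0 fm]
      fI unfolding B_def M_def by blast
  define Z where "Z = {x. x \<in> B \<and> w x = 0}"
  have Zm[measurable]: "Z \<in> sets lebesgue" unfolding Z_def by measurable
  show ?thesis
  proof (cases "emeasure lebesgue Z = 0")
    case False
    have "emeasure lebesgue Z \<le> emeasure lebesgue B" unfolding Z_def by (intro emeasure_mono) auto
    then have "emeasure lebesgue Z \<noteq> top" using Bfin by (auto simp: top_unique)
    then have zeq: "emeasure lebesgue Z = ennreal (measure lebesgue Z)"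
      by (intro emeasure_eq_ennreal_measure) (simp add: infinity_ennreal_def)
    define z where "z = measure lebesgue Z"
    have z0: "0 < z" using False zeq measure_nonneg[of lebesgue Z] unfolding z_def
      by (metis ennreal_0 less_eq_real_def)
    have az: "ennreal (a * z) \<le> D" if a0: "0 \<le> a" for a
    proof -
      define f where "f x = a * indicator Z x" for x
      have fm: "f \<in> borel_measurable lebesgue" unfolding f_def by measurable
      have "(\<integral>\<^sup>+x. ennreal (\<bar>f x\<bar> powr p * w x * indicator B x) \<partial>lebesgue) = 0"
        unfolding f_def Z_def using p by (subst nn_integral_cong[where v="\<lambda>_. 0"]) (auto simp: indicator_def)
      then have fI: "(\<integral>\<^sup>+x. ennreal (\<bar>f x\<bar> powr p * w x * indicator B x) \<partial>lebesgue) \<le> ennreal M" by simp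
      have "(\<integral>\<^sup>+x. ennreal \<bar>f x * indicator B x\<bar> \<partial>lebesgue) = (\<integral>\<^sup>+x. ennreal a * indicator Z x \<partial>lebesgue)"
        unfolding f_def Z_def using a0 by (intro nn_integral_cong) (auto simp: indicator_def)
      also have "\<dots> = ennreal (a * z)" using zeq a0 unfolding z_def
        by (simp add: nn_integral_cmult_indicator ennreal_mult''[symmetric])
      finally show ?thesis using testD[OF fm fI] by simp
    qed
    have "D = top"
    proof (rule ccontr)
      assume "D \<noteq> top"
      then obtain d where d: "D = ennreal d" "0 \<le> d" by (metis ennreal_cases)
      have "ennreal ((d + 1) / z * z) \<le> D" using az[of "(d+1)/z"] d z0 by simp
      then have "ennreal (d + 1) \<le> ennreal d" using z0 d by simp
      then show False using d by (simp add: ennreal_le_iff)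
    qed
    then show ?thesis unfolding D_def B_def by simp
  next
    case True
    have "{x \<in> space lebesgue. \<not> (x \<in> B \<longrightarrow> w x \<noteq> 0)} = Z" unfolding Z_def by auto
    then have "(AE x in lebesgue. x \<in> B \<longrightarrow> w x \<noteq> 0) \<longleftrightarrow> emeasure lebesgue Z = 0"
      by (rule AE_iff_measurable[OF Zm])
    then have aeZ: "AE x in lebesgue. x \<in> B \<longrightarrow> w x \<noteq> 0" using True by simp
    define e where "e = 1 - p / (p - 1)"
    define g where "g x = w x powr e" for x
    have gm[measurable]: "g \<in> borel_measurable lebesgue" unfolding g_def by measurable
    have g0: "0 \<le> g x" for x unfolding g_def by simp
    have gpw: "g x powr p * w x = g x" if "w x \<noteq> 0" for x
    proof -
      have wx: "0 < w x" using that w0[of x] by (simp add: less_le)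
      have "e * p + 1 = e" unfolding e_def using p by (simp add: field_simps)
      have "w x powr (e * p) * w x = w x powr (e * p) * w x powr 1" using wx by simp
      also have "\<dots> = w x powr (e * p + 1)" by (simp add: powr_add)
      finally show ?thesis unfolding g_def using wx \<open>e * p + 1 = e\<close>
        by (simp add: powr_powr)
    qed
    define E where "E N = {x. x \<in> B \<and> w x \<noteq> 0 \<and> g x \<le> real N}" for N :: nat
    have Em[measurable]: "E N \<in> sets lebesgue" for N unfolding E_def by measurable
    have EB: "E N \<subseteq> B" for N unfolding E_def by auto
    define h where "h N x = ennreal (g x) * indicator (E N) x" for N x
    have hm[measurable]: "h N \<in> borel_measurable lebesgue" for N unfolding h_def by measurable
    define X where "X = enn_root (p/(p-1)) (D * ennreal (M powr (- 1/p)))"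
    have IN: "(\<integral>\<^sup>+x. h N x \<partial>lebesgue) \<le> X" for N
    proof -
      have "(\<integral>\<^sup>+x. h N x \<partial>lebesgue) \<le> (\<integral>\<^sup>+x. ennreal (real N) * indicator (E N) x \<partial>lebesgue)"
        unfolding h_def E_def by (intro nn_integral_mono) (auto simp: indicator_def intro: ennreal_leI)
      also have "\<dots> = ennreal (real N) * emeasure lebesgue (E N)" by (simp add: nn_integral_cmult_indicator)
      also have "\<dots> < top"
      proof -
        have "emeasure lebesgue (E N) \<le> emeasure lebesgue B" using EB by (intro emeasure_mono) auto
        then have "emeasure lebesgue (E N) < top" using Bfin by (simp add: le_less_trans)
        then show ?thesis by (simp add: ennreal_mult_less_top)
      qed
      finally have "(\<integral>\<^sup>+x. h N x \<partial>lebesgue) \<noteq> top" by simp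
      then obtain i where i: "(\<integral>\<^sup>+x. h N x \<partial>lebesgue) = ennreal i" "0 \<le> i" by (metis ennreal_cases)
      show ?thesis
      proof (cases "i = 0")
        case True then show ?thesis using i by simp
      next
        case False
        then have i0: "0 < i" using i by simp
        define a where "a = (M / i) powr (1/p)"
        have a0: "0 < a" unfolding a_def using M0 i0 by simp
        have ap: "a powr p = M / i" unfolding a_def using M0 i0 p by (simp add: powr_powr)
        define f where "f x = a * g x * indicator (E N) x" for x
        have fm: "f \<in> borel_measurable lebesgue" unfolding f_def by measurable
        have "(\<integral>\<^sup>+x. ennreal (\<bar>f x\<bar> powr p * w x * indicator B x) \<partial>lebesgue) = (\<integral>\<^sup>+x. ennreal (a powr p) * h N x \<partial>lebesgue)"
        proof (intro nn_integral_cong)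
          fix x
          show "ennreal (\<bar>f x\<bar> powr p * w x * indicator B x) = ennreal (a powr p) * h N x"
          proof (cases "x \<in> E N")
            case True
            then have wx: "w x \<noteq> 0" and xB: "x \<in> B" unfolding E_def by auto
            have "\<bar>f x\<bar> powr p * w x * indicator B x = a powr p * (g x powr p * w x)"
              using True xB a0 g0[of x] unfolding f_def by (simp add: powr_mult)
            also have "\<dots> = a powr p * g x" using gpw[OF wx] by simp
            finally show ?thesis using True a0 g0[of x] unfolding h_def by (simp add: ennreal_mult'')
          next
            case False
            then show ?thesis using p unfolding f_def h_def by simp
          qed
        qed
        also have "\<dots> = ennreal (a powr p) * ennreal i" using i by (simp add: nn_integral_cmult)
        also have "\<dots> = ennreal M" using ap i0 by (simp add: ennreal_mult''[symmetric])
        finally have fI: "(\<integral>\<^sup>+x. ennreal (\<bar>f x\<bar> powr p * w x * indicator B x) \<partial>lebesgue) \<le> ennreal M" by simp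
        have "(\<integral>\<^sup>+x. ennreal \<bar>f x * indicator B x\<bar> \<partial>lebesgue) = (\<integral>\<^sup>+x. ennreal a * h N x \<partial>lebesgue)"
        proof (intro nn_integral_cong)
          fix x show "ennreal \<bar>f x * indicator B x\<bar> = ennreal a * h N x"
            using EB[of N] a0 g0[of x] unfolding f_def h_def
            by (cases "x \<in> E N") (auto simp: indicator_def ennreal_mult'' abs_mult)
        qed
        also have "\<dots> = ennreal (a * i)" using i a0 by (simp add: nn_integral_cmult ennreal_mult''[symmetric])
        finally have ai: "ennreal (a * i) \<le> D" using testD[OF fm fI] by simp
        have aieq: "a * i = M powr (1/p) * i powr ((p-1)/p)"
        proof -
          have "a * i = M powr (1/p) / i powr (1/p) * i powr 1" unfolding a_def using M0 i0 by (simp add: powr_divide)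
          also have "\<dots> = M powr (1/p) * (i powr 1 / i powr (1/p))" by simp
          also have "\<dots> = M powr (1/p) * i powr (1 - 1/p)" using i0 by (simp add: powr_diff)
          also have "1 - 1/p = (p-1)/p" using p by (simp add: field_simps)
          finally show ?thesis .
        qed
        have "ennreal (i powr ((p-1)/p)) = ennreal (a * i) * ennreal (M powr (- 1/p))"
        proof -
          have "M powr (1/p) * M powr (- 1/p) = 1" using M0 by (simp add: powr_add[symmetric])
          then have "a * i * M powr (- 1/p) = i powr ((p-1)/p)" unfolding aieq
            by (metis mult.commute mult.left_commute mult_1)
          then show ?thesis using a0 i0 M0 by (simp add: ennreal_mult''[symmetric])
        qed
        also have "\<dots> \<le> D * ennreal (M powr (- 1/p))" using ai by (rule mult_right_mono) simp
        finally have "enn_root (p/(p-1)) (ennreal (i powr ((p-1)/p))) \<le> X"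
          unfolding X_def using p by (intro enn_root_mono) auto
        moreover have "enn_root (p/(p-1)) (ennreal (i powr ((p-1)/p))) = ennreal i"
          using i0 p by (simp add: enn_root_ennreal powr_powr)
        ultimately show ?thesis using i by simp
      qed
    qed
    have inc: "incseq h"
      unfolding incseq_def le_fun_def h_def E_def
      by (auto simp: indicator_def intro: order.trans)
    have "J = (\<integral>\<^sup>+x. (SUP N. h N x) \<partial>lebesgue)"
      unfolding J_def using aeZ
    proof (intro nn_integral_cong_AE, eventually_elim)
      case (elim x)
      show ?case
      proof (cases "x \<in> B")
        case False
        then have "h N x = 0" for N using EB[of N] unfolding h_def by (auto simp: indicator_def)
        then show ?thesis using False by simp
      next
        case True
        then have wx: "w x \<noteq> 0" using elim by simp
        have "(SUP N. h N x) = ennreal (g x)"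
        proof (rule antisym)
          show "(SUP N. h N x) \<le> ennreal (g x)"
            by (rule SUP_least) (auto simp: h_def indicator_def)
          obtain N :: nat where N: "g x \<le> real N" using real_arch_simple by blast
          then have "h N x = ennreal (g x)" using True wx unfolding h_def E_def by simp
          then show "ennreal (g x) \<le> (SUP N. h N x)" by (metis UNIV_I SUP_upper)
        qed
        then show ?thesis using True wx unfolding w_dual_power_def g_def e_def by simp
      qed
    qed
    also have "\<dots> = (SUP N. (\<integral>\<^sup>+x. h N x \<partial>lebesgue))"
      by (rule nn_integral_monotone_convergence_SUP[OF inc hm])
    also have "\<dots> \<le> X" by (rule SUP_least) (use IN in auto)
    finally have JX: "J \<le> X" .
    have "Gp p w B \<le> enn_root ((p-1)/p) X" unfolding G using JX p by (intro enn_root_mono) auto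
    also have "\<dots> = D * ennreal (M powr (- 1/p))"
      unfolding X_def using p by (simp add: enn_root_root)
    finally have "ennreal (M powr (1/p)) * Gp p w B \<le> ennreal (M powr (1/p)) * (D * ennreal (M powr (- 1/p)))"
      by (rule mult_left_mono) simp
    also have "\<dots> = D"
    proof -
      have "M powr (1/p) * M powr (- 1/p) = 1" using M0 by (simp add: powr_add[symmetric])
      then have "ennreal (M powr (1/p)) * ennreal (M powr (- 1/p)) = 1" by (simp add: ennreal_mult''[symmetric])
      then show ?thesis by (metis mult.commute mult.left_commute mult_1)
    qed
    finally show ?thesis unfolding M_def D_def B_def .
  qed
qed

lemma ap_term:
  fixes w :: "'a::euclidean_space \<Rightarrow> real"
  shows "Ap_loc_const p w = (SUP (c, r)\<in>{(c, r). 0 < r \<and> 4 * r < norm c}.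
     enn_root (1/p) (\<integral>\<^sup>+x\<in>ball c r. ennreal (w x) \<partial>lebesgue) * Gp p w (ball c r) / emeasure lebesgue (ball c r))"
proof -
  have S: "{(c, r). 0 < r \<and> r < norm c / 4} = {(c::'a, r). 0 < r \<and> 4 * r < norm c}" by auto
  show ?thesis
  proof (cases "p = 1")
    case True
    show ?thesis unfolding Ap_loc_const_def Gp_def S using True
      by (simp add: divide_ennreal_def mult.assoc mult.commute mult.left_commute)
  next
    case False
    show ?thesis unfolding Ap_loc_const_def Gp_def S using False by simp
  qed
qed

lemma ball_bounds:
  fixes \<phi> :: "'a::euclidean_space \<Rightarrow> real \<Rightarrow> real"
  assumes pos: "\<And>c r. 0 < r \<Longrightarrow> 0 < \<phi> c r" and p: "1 \<le> p"
    and Kd: "\<And>s. 0 < s \<Longrightarrow> \<phi> 0 (2 * s) \<le> K * \<phi> 0 s"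
    and Kr: "\<And>s R. 0 < s \<Longrightarrow> s/2 < R \<Longrightarrow> \<phi> 0 s \<le> K * \<phi> 0 R" and K1: "1 \<le> K"
    and r: "0 < r" "4 * r < norm c"
    and w: "is_weight w"
  defines "X \<equiv> enn_root (1/p) (\<integral>\<^sup>+x\<in>ball c r. ennreal (w x) \<partial>lebesgue) * Gp p w (ball c r)"
    and "ND \<equiv> lm_norm \<phi> p w (indicator (ball c r)) * lm_dual_norm \<phi> p w (indicator (ball c r))"
  shows "ND \<le> ennreal (K powr (2/p)) * X" "X \<le> ennreal (K powr (2/p)) * ND"
proof -
  define W where "W = (\<integral>\<^sup>+x\<in>ball c r. ennreal (w x) \<partial>lebesgue)"
  define Gv where "Gv = Gp p w (ball c r)"
  define N where "N = lm_norm \<phi> p w (indicator (ball c r))"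
  define D where "D = lm_dual_norm \<phi> p w (indicator (ball c r))"
  define \<Phi> where "\<Phi> = \<phi> 0 (norm c)"
  have c0: "0 < norm c" using r by linarith
  have Phi: "0 < \<Phi>" unfolding \<Phi>_def using pos c0 by blast
  have K0: "0 < K" using K1 by simp
  have N1: "N \<le> enn_root (1/p) W * ennreal ((K / \<Phi>) powr (1/p))"
    unfolding N_def W_def \<Phi>_def by (rule norm_upper[where \<phi>=\<phi>, OF pos p Kr r])
  have D1: "D \<le> ennreal ((K * \<Phi>) powr (1/p)) * Gv"
    unfolding D_def Gv_def \<Phi>_def by (rule dual_upper[where \<phi>=\<phi>, OF pos p Kd w r])
  have N2: "enn_root (1/p) W * ennreal ((1 / (K * \<Phi>)) powr (1/p)) \<le> N"
    unfolding N_def W_def \<Phi>_def by (rule norm_lower[where \<phi>=\<phi>, OF pos p Kd r])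
  have D2: "ennreal ((\<Phi> / K) powr (1/p)) * Gv \<le> D"
  proof (cases "p = 1")
    case True
    show ?thesis unfolding D_def Gv_def \<Phi>_def by (rule dual_lower_1[of \<phi> p K r c w, OF pos True Kr K1 r w])
  next
    case False
    then have p2: "1 < p" using p by simp
    show ?thesis unfolding D_def Gv_def \<Phi>_def by (rule dual_lower_p[of \<phi> p K r c w, OF pos p2 Kr K1 r w])
  qed
  have e1: "(K / \<Phi>) powr (1/p) * (K * \<Phi>) powr (1/p) = K powr (2/p)"
  proof -
    have "(K / \<Phi>) powr (1/p) * (K * \<Phi>) powr (1/p) = (K / \<Phi> * (K * \<Phi>)) powr (1/p)"
      using K0 Phi powr_mult[of "K / \<Phi>" "K * \<Phi>" "1/p"] by (simp only:)
    also have "K / \<Phi> * (K * \<Phi>) = K powr 2" using Phi K0 by (simp add: powr_numeral power2_eq_square)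
    also have "(K powr 2) powr (1/p) = K powr (2/p)" by (simp add: powr_powr)
    finally show ?thesis .
  qed
  have e2: "(1 / (K * \<Phi>)) powr (1/p) * (\<Phi> / K) powr (1/p) * K powr (2/p) = 1"
  proof -
    have "(1 / (K * \<Phi>)) powr (1/p) * (\<Phi> / K) powr (1/p) = (1 / (K * \<Phi>) * (\<Phi> / K)) powr (1/p)"
      using K0 Phi powr_mult[of "1 / (K * \<Phi>)" "\<Phi> / K" "1/p"] by (simp only:)
    also have "1 / (K * \<Phi>) * (\<Phi> / K) = K powr (-2)" using Phi K0 by (simp add: powr_minus powr_numeral power2_eq_square field_simps)
    also have "(K powr (-2)) powr (1/p) = K powr (-2/p)" by (simp add: powr_powr)
    finally show ?thesis using K0 by (simp add: powr_add[symmetric])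
  qed
  have "N * D \<le> (enn_root (1/p) W * ennreal ((K / \<Phi>) powr (1/p))) * (ennreal ((K * \<Phi>) powr (1/p)) * Gv)"
    using N1 D1 by (rule mult_mono) auto
  also have "\<dots> = ennreal ((K / \<Phi>) powr (1/p) * (K * \<Phi>) powr (1/p)) * (enn_root (1/p) W * Gv)"
    by (simp add: ennreal_mult'' mult.assoc mult.commute mult.left_commute)
  also have "\<dots> = ennreal (K powr (2/p)) * (enn_root (1/p) W * Gv)" using e1 by simp
  finally show "ND \<le> ennreal (K powr (2/p)) * X" unfolding ND_def X_def N_def D_def W_def Gv_def .
  have "ennreal ((1 / (K * \<Phi>)) powr (1/p) * (\<Phi> / K) powr (1/p)) * (enn_root (1/p) W * Gv)
     = (enn_root (1/p) W * ennreal ((1 / (K * \<Phi>)) powr (1/p))) * (ennreal ((\<Phi> / K) powr (1/p)) * Gv)"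
    by (simp add: ennreal_mult'' mult.assoc mult.commute mult.left_commute)
  also have "\<dots> \<le> N * D" using N2 D2 by (rule mult_mono) auto
  finally have low: "ennreal ((1 / (K * \<Phi>)) powr (1/p) * (\<Phi> / K) powr (1/p)) * (enn_root (1/p) W * Gv) \<le> N * D" .
  have "enn_root (1/p) W * Gv = ennreal ((1 / (K * \<Phi>)) powr (1/p) * (\<Phi> / K) powr (1/p) * K powr (2/p)) * (enn_root (1/p) W * Gv)"
    using e2 by simp
  also have "\<dots> = ennreal (K powr (2/p)) * (ennreal ((1 / (K * \<Phi>)) powr (1/p) * (\<Phi> / K) powr (1/p)) * (enn_root (1/p) W * Gv))"
    by (simp add: ennreal_mult'' mult.assoc mult.commute mult.left_commute)
  also have "\<dots> \<le> ennreal (K powr (2/p)) * (N * D)" using low by (rule mult_left_mono) simp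
  finally show "X \<le> ennreal (K powr (2/p)) * ND" unfolding ND_def X_def N_def D_def W_def Gv_def .
qed

theorem lemma6p2:
  fixes \<phi> :: "'a::euclidean_space \<Rightarrow> real \<Rightarrow> real" and p :: real
  assumes "1 \<le> p"
    and "\<And>c r. 0 < r \<Longrightarrow> 0 < \<phi> c r"
    and "doubling \<phi>" and "reverse_doubling \<phi>"
  shows "{w :: 'a \<Rightarrow> real. is_weight w \<and> A_loc_LM_const \<phi> p w < \<infinity>}
           = {w. is_weight w \<and> Ap_loc_const p w < \<infinity>}
         \<and> (\<exists>C1 C2 :: real. 0 < C1 \<and> 0 < C2 \<and>
             (\<forall>w :: 'a \<Rightarrow> real. is_weight w \<longrightarrow>
                A_loc_LM_const \<phi> p w \<le> ennreal C1 * Ap_loc_const p w \<and>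
                Ap_loc_const p w \<le> ennreal C2 * A_loc_LM_const \<phi> p w))"
proof -
  note p = assms(1) and pos = assms(2)
  obtain K where K1: "1 \<le> K" and Kd: "\<And>s. 0 < s \<Longrightarrow> \<phi> 0 (2 * s) \<le> K * \<phi> 0 s"
    and Kr: "\<And>s R. 0 < s \<Longrightarrow> s/2 < R \<Longrightarrow> \<phi> 0 s \<le> K * \<phi> 0 R"
    using phi_const[OF assms(2) assms(3) assms(4)] by blast
  define C where "C = K powr (2/p)"
  have C0: "0 < C" unfolding C_def using K1 by simp
  define S where "S = {(c::'a, r::real). 0 < r \<and> 4 * r < norm c}"
  define ND where "ND w c r = lm_norm \<phi> p w (indicator (ball c r)) * lm_dual_norm \<phi> p w (indicator (ball c r))"
    for w and c :: 'a and r
  define X where "X w c r = enn_root (1/p) (\<integral>\<^sup>+x\<in>ball c r. ennreal (w x) \<partial>lebesgue) * Gp p w (ball c r)"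
    for w and c :: 'a and r
  have A_eq: "A_loc_LM_const \<phi> p w = (SUP (c, r)\<in>S. ND w c r / emeasure lebesgue (ball c r))" for w
    unfolding A_loc_LM_const_def S_def ND_def by simp
  have Ap_eq: "Ap_loc_const p w = (SUP (c, r)\<in>S. X w c r / emeasure lebesgue (ball c r))" for w
    unfolding ap_term S_def X_def by simp
  have le1: "A_loc_LM_const \<phi> p w \<le> ennreal C * Ap_loc_const p w" if w: "is_weight w" for w
    unfolding A_eq Ap_eq
  proof (rule SUP_least)
    fix x assume "x \<in> S"
    then obtain c r where x: "x = (c, r)" "0 < r" "4 * r < norm c" unfolding S_def by auto
    have "ND w c r \<le> ennreal C * X w c r"
      unfolding ND_def X_def C_def by (rule ball_bounds(1)[of \<phi> p K r c w, OF pos p Kd Kr K1 x(2,3) w])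
    then have "ND w c r / emeasure lebesgue (ball c r) \<le> ennreal C * X w c r / emeasure lebesgue (ball c r)"
      unfolding divide_ennreal_def by (rule mult_right_mono) simp
    also have "\<dots> = ennreal C * (X w c r / emeasure lebesgue (ball c r))"
      by (simp add: divide_ennreal_def mult.assoc)
    also have "\<dots> \<le> ennreal C * (SUP (c, r)\<in>S. X w c r / emeasure lebesgue (ball c r))"
      by (intro mult_left_mono SUP_upper2[of "(c, r)"]) (use x \<open>x \<in> S\<close> in auto)
    finally show "(case x of (c, r) \<Rightarrow> ND w c r / emeasure lebesgue (ball c r))
        \<le> ennreal C * (SUP (c, r)\<in>S. X w c r / emeasure lebesgue (ball c r))" using x by simp
  qed
  have le2: "Ap_loc_const p w \<le> ennreal C * A_loc_LM_const \<phi> p w" if w: "is_weight w" for w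
    unfolding A_eq Ap_eq
  proof (rule SUP_least)
    fix x assume "x \<in> S"
    then obtain c r where x: "x = (c, r)" "0 < r" "4 * r < norm c" unfolding S_def by auto
    have "X w c r \<le> ennreal C * ND w c r"
      unfolding ND_def X_def C_def by (rule ball_bounds(2)[of \<phi> p K r c w, OF pos p Kd Kr K1 x(2,3) w])
    then have "X w c r / emeasure lebesgue (ball c r) \<le> ennreal C * ND w c r / emeasure lebesgue (ball c r)"
      unfolding divide_ennreal_def by (rule mult_right_mono) simp
    also have "\<dots> = ennreal C * (ND w c r / emeasure lebesgue (ball c r))"
      by (simp add: divide_ennreal_def mult.assoc)
    also have "\<dots> \<le> ennreal C * (SUP (c, r)\<in>S. ND w c r / emeasure lebesgue (ball c r))"
      by (intro mult_left_mono SUP_upper2[of "(c, r)"]) (use x \<open>x \<in> S\<close> in auto)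
    finally show "(case x of (c, r) \<Rightarrow> X w c r / emeasure lebesgue (ball c r))
        \<le> ennreal C * (SUP (c, r)\<in>S. ND w c r / emeasure lebesgue (ball c r))" using x by simp
  qed
  have iff: "A_loc_LM_const \<phi> p w < \<infinity> \<longleftrightarrow> Ap_loc_const p w < \<infinity>" if w: "is_weight w" for w
  proof
    assume A: "A_loc_LM_const \<phi> p w < \<infinity>"
    have "ennreal C * A_loc_LM_const \<phi> p w < top" using A by (simp add: ennreal_mult_less_top infinity_ennreal_def)
    then show "Ap_loc_const p w < \<infinity>" using le2[OF w]
      by (simp add: infinity_ennreal_def le_less_trans)
  next
    assume A: "Ap_loc_const p w < \<infinity>"
    have "ennreal C * Ap_loc_const p w < top" using A by (simp add: ennreal_mult_less_top infinity_ennreal_def)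
    then show "A_loc_LM_const \<phi> p w < \<infinity>" using le1[OF w]
      by (simp add: infinity_ennreal_def le_less_trans)
  qed
  have seteq: "{w :: 'a \<Rightarrow> real. is_weight w \<and> A_loc_LM_const \<phi> p w < \<infinity>}
           = {w. is_weight w \<and> Ap_loc_const p w < \<infinity>}"
    using iff by blast
  show ?thesis using seteq le1 le2 C0 by blast
qed


end
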